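(* Let $n,t\in\mathbb N$. If $\mathcal H$ is an $n$-vertex intersecting hypergraph with codegree at most $t$ and no edge of size one, then $e(\mathcal H)\leq t\max_{v\in V(\mathcal H)}|N[v]|$. Moreover, if equality holds, then there exists $v\in V(\mathcal H)$ such that $e(\mathcal H)=t|N[v]|$, $d(x)=0$ for every $x\in V(\mathcal H)\setminus N[v]$, and $\mathcal H[N[v]]$ is either a $t$-fold projective plane of order $k$ for some $k\in\mathbb N$ (so that $|N[v]|=k^2+k+1$), or a $t$-fold near-pencil.
   Context: A hypergraph $\mathcal H$ consists of a finite vertex set $V(\mathcal H)$ and a finite set of edges, each edge $e$ equipped with a nonempty set $V(e)\subseteq V(\mathcal H)$; multiple edges with the same vertex set are allowed. The size of $e$ is $|V(e)|$, and $e(\mathcal H)$ is the number of edges. $d(x)$ is the number of edges containing $x$. The codegree of distinct vertices $u,v$ is the number of edges containing both; the codegree of $\mathcal H$ is the maximum of these. $\mathcal H$ is intersecting if $V(e)\cap V(f)\neq\emptyset$ for all edges $e,f$, and linear if its codegree is at most one. For $v\in V(\mathcal H)$, $N[v]=\bigcup_{e\in\mathcal H: v\in V(e)}V(e)$. For $S\subseteq V(\mathcal H)$, $\mathcal H[S]$ is the hypergraph with vertex set $S$ and edge set $\{e\in\mathcal H: V(e)\subseteq S\}$. A projective plane of order $k$ is a linear intersecting hypergraph with $k^2+k+1$ vertices in which every edge has size $k+1$ and every vertex lies in exactly $k+1$ edges. A near-pencil on $m$ vertices is a hypergraph isomorphic to the one with vertex set $\{v,v_1,\dots,v_{m-1}\}$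 and edges $e,e_1,\dots,e_{m-1}$ where $V(e)=\{v_1,\dots,v_{m-1}\}$ and $V(e_i)=\{v,v_i\}$. A $t$-fold $\mathcal H$ is obtained from $\mathcal H$ by replacing each edge with $t$ distinct edges having the same vertex set. *)

theory Defs
  imports Main "HOL-Library.Multiset"
begin

definition hypergraph :: "'a set \<Rightarrow> 'a set multiset \<Rightarrow> bool" where
  "hypergraph V E \<longleftrightarrow> finite V \<and> (\<forall>e\<in>#E. e \<noteq> {} \<and> e \<subseteq> V)"

definition degree :: "'a set multiset \<Rightarrow> 'a \<Rightarrow> nat" where
  "degree E x = size (filter_mset (\<lambda>e. x \<in> e) E)"

definition codegree_le :: "'a set multiset \<Rightarrow> nat \<Rightarrow> bool" where
  "codegree_le E t \<longleftrightarrow> (\<forall>u v. u \<noteq> v \<longrightarrow> size (filter_mset (\<lambda>e. u \<in> e \<and> v \<in> e) E) \<le> t)"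

definition intersecting :: "'a set multiset \<Rightarrow> bool" where
  "intersecting E \<longleftrightarrow> (\<forall>e\<in>#E. \<forall>f\<in>#E. e \<inter> f \<noteq> {})"

definition linear :: "'a set multiset \<Rightarrow> bool" where
  "linear E \<longleftrightarrow> codegree_le E 1"

definition closed_nbhd :: "'a set multiset \<Rightarrow> 'a \<Rightarrow> 'a set" where
  "closed_nbhd E v = \<Union>{e. e \<in># E \<and> v \<in> e}"

text \<open>Edge multiset of the induced subhypergraph H[S] (its vertex set is S).\<close>
definition induced :: "'a set multiset \<Rightarrow> 'a set \<Rightarrow> 'a set multiset" where
  "induced E S = filter_mset (\<lambda>e. e \<subseteq> S) E"

definition projective_plane :: "'a set \<Rightarrow> 'a set multiset \<Rightarrow> nat \<Rightarrow> bool" where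
  "projective_plane V E k \<longleftrightarrow> hypergraph V E \<and> linear E \<and> intersecting E \<and>
     card V = k^2 + k + 1 \<and> (\<forall>e\<in>#E. card e = k + 1) \<and> (\<forall>x\<in>V. degree E x = k + 1)"

definition near_pencil :: "'a set \<Rightarrow> 'a set multiset \<Rightarrow> nat \<Rightarrow> bool" where
  "near_pencil V E m \<longleftrightarrow> hypergraph V E \<and> card V = m \<and>
     (\<exists>v vs. V = insert v vs \<and> v \<notin> vs \<and>
        E = add_mset vs (image_mset (\<lambda>u. {v, u}) (mset_set vs)))"

definition t_fold :: "nat \<Rightarrow> 'a set multiset \<Rightarrow> 'a set multiset" where
  "t_fold t P = repeat_mset t P"

end

theory Submission
  imports Defs Complex_Main
begin

definition codeg :: "'a set multiset \<Rightarrow> 'a \<Rightarrow> 'a \<Rightarrow> nat" where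
  "codeg E u v = size (filter_mset (\<lambda>e. u \<in> e \<and> v \<in> e) E)"

lemma union_bound:
  assumes "finite U" "\<forall>e\<in>#M. P e \<longrightarrow> (\<exists>u\<in>U. Q u e)"
  shows "size (filter_mset P M) \<le> (\<Sum>u\<in>U. size (filter_mset (Q u) M))"
  using assms(2)
proof (induction M)
  case empty
  then show ?case by simp
next
  case (add a M)
  have IH: "size (filter_mset P M) \<le> (\<Sum>u\<in>U. size (filter_mset (Q u) M))"
    using add by auto
  have eq: "(\<Sum>u\<in>U. size (filter_mset (Q u) (add_mset a M)))
     = (\<Sum>u\<in>U. (if Q u a then 1 else 0)) + (\<Sum>u\<in>U. size (filter_mset (Q u) M))"
    by (subst sum.distrib[symmetric], rule sum.cong) auto
  show ?case
  proof (cases "P a")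
    case True
    then obtain u where u: "u \<in> U" "Q u a" using add.prems by auto
    have "1 \<le> (\<Sum>u\<in>U. (if Q u a then 1 else 0::nat))"
      using u assms(1) by (metis (mono_tags, lifting) member_le_sum order_refl zero_le)
    then show ?thesis using True IH eq by simp
  next
    case False
    then show ?thesis using IH eq by simp
  qed
qed

lemma union_bound_strict:
  assumes "finite U" "\<forall>e\<in>#M. P e \<longrightarrow> (\<exists>u\<in>U. Q u e)"
    and "a \<in># M" "P a" "u \<in> U" "w \<in> U" "u \<noteq> w" "Q u a" "Q w a"
  shows "size (filter_mset P M) < (\<Sum>u\<in>U. size (filter_mset (Q u) M))"
proof -
  obtain M' where M: "M = add_mset a M'" using assms(3) by (metis multi_member_split)
  have IH: "size (filter_mset P M') \<le> (\<Sum>u\<in>U. size (filter_mset (Q u) M'))"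
    using union_bound[OF assms(1), of M' P Q] assms(2) M by auto
  have eq: "(\<Sum>u\<in>U. size (filter_mset (Q u) (add_mset a M')))
     = (\<Sum>u\<in>U. (if Q u a then 1 else 0)) + (\<Sum>u\<in>U. size (filter_mset (Q u) M'))"
    by (subst sum.distrib[symmetric], rule sum.cong) auto
  have "(\<Sum>u\<in>{u,w}. (if Q u a then 1 else 0::nat)) \<le> (\<Sum>u\<in>U. (if Q u a then 1 else 0))"
    by (rule sum_mono2) (use assms in auto)
  then have "2 \<le> (\<Sum>u\<in>U. (if Q u a then 1 else 0::nat))" using assms by simp
  then show ?thesis using assms(4) IH eq M by simp
qed

lemma all_eq_from_sum:
  fixes f :: "'b \<Rightarrow> nat"
  assumes "finite U" "\<forall>u\<in>U. f u \<le> t" "t * card U \<le> (\<Sum>u\<in>U. f u)" "u \<in> U"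
  shows "f u = t"
proof (rule ccontr)
  assume "f u \<noteq> t"
  then have "f u < t" using assms by force
  then have "(\<Sum>u\<in>U. f u) < (\<Sum>u\<in>U. t)"
    using assms by (intro sum_strict_mono_ex1) auto
  then show False using assms by (simp add: mult.commute)
qed

lemma msum_if_const:
  "sum_mset (image_mset (\<lambda>e. if P e then (c::real) else 0) M) = c * size (filter_mset P M)"
  by (induction M) (auto simp: algebra_simps)

lemma msum_swap:
  fixes g :: "'b \<Rightarrow> 'c \<Rightarrow> real"
  shows "(\<Sum>y\<in>L. sum_mset (image_mset (g y) M)) = sum_mset (image_mset (\<lambda>e. \<Sum>y\<in>L. g y e) M)"
  by (induction M) (auto simp: sum.distrib)

lemma msum_mono:
  fixes f g :: "'c \<Rightarrow> real"
  shows "(\<forall>e\<in>#M. f e \<le> g e) \<Longrightarrow> sum_mset (image_mset f M) \<le> sum_mset (image_mset g M)"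
  by (induction M) (auto intro: add_mono)

lemma msum_strict:
  fixes f g :: "'c \<Rightarrow> real"
  assumes "\<forall>e\<in>#M. f e \<le> g e" "a \<in># M" "f a < g a"
  shows "sum_mset (image_mset f M) < sum_mset (image_mset g M)"
proof -
  obtain M' where M: "M = add_mset a M'" using assms(2) by (metis multi_member_split)
  have "sum_mset (image_mset f M') \<le> sum_mset (image_mset g M')"
    using msum_mono[of M' f g] assms M by auto
  then show ?thesis using M assms(3) by simp
qed

lemma fractional_core:
  fixes L :: "'a set" and E :: "'a set multiset" and t :: nat
  assumes fin: "finite L" "L \<noteq> {}"
  and k1: "\<forall>e\<in>#E. card (e \<inter> L) \<ge> 1"
  and rlt: "\<forall>y\<in>L. degree E y < size E"
  and ineq: "\<forall>y\<in>L. \<forall>e\<in>#E. y \<notin> e \<longrightarrow> degree E y \<le> t * card (e \<inter> L)"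
  and big: "t * card L \<le> size E"
  shows "(\<forall>y\<in>L. \<forall>e\<in>#E. y \<notin> e \<longrightarrow> card L * degree E y = size E * card (e \<inter> L))
         \<and> (\<forall>e\<in>#E. card (e \<inter> L) < card L)"
proof -
  define m where "m = size E"
  define N where "N = card L"
  define r where "r = (\<lambda>y. degree E y)"
  define k where "k = (\<lambda>e. card (e \<inter> L))"
  have Npos: "N > 0" using fin N_def by (simp add: card_gt_0_iff)
  have mpos: "m > 0" using rlt fin m_def by auto
  define fa where "fa = (\<lambda>y e. if y \<notin> e then 1 / (real N * (real m - real (r y))) else 0)"
  define fb where "fb = (\<lambda>y e. if y \<notin> e then 1 / (real m * (real N - real (k e))) else (0::real))"
  define A where "A = (\<Sum>y\<in>L. sum_mset (image_mset (fa y) E))"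
  define B where "B = (\<Sum>y\<in>L. sum_mset (image_mset (fb y) E))"
  have sizeneg: "size (filter_mset (\<lambda>e. y \<notin> e) E) = m - r y" for y
  proof -
    have "size E = size (filter_mset (\<lambda>e. y \<in> e) E) + size (filter_mset (\<lambda>e. \<not> y \<in> e) E)"
      by (metis (no_types) multiset_partition size_union)
    then show ?thesis unfolding m_def r_def degree_def by simp
  qed
  have A1: "A = 1"
  proof -
    have "sum_mset (image_mset (fa y) E) = 1 / real N" if "y \<in> L" for y
    proof -
      have rl: "r y < m" using rlt that r_def m_def by auto
      have "sum_mset (image_mset (fa y) E) = 1 / (real N * (real m - real (r y))) * real (m - r y)"
        unfolding fa_def using msum_if_const[of "\<lambda>e. y \<notin> e" _ E] sizeneg by simp
      also have "\<dots> = 1 / real N" using rl Npos by (simp add: of_nat_diff)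
      finally show ?thesis .
    qed
    then have "A = (\<Sum>y\<in>L. 1 / real N)" unfolding A_def by (rule sum.cong[OF refl])
    then show ?thesis using Npos N_def by simp
  qed
  have Bform: "B = sum_mset (image_mset (\<lambda>e. if k e < N then 1 / real m else 0) E)"
  proof -
    have "B = sum_mset (image_mset (\<lambda>e. \<Sum>y\<in>L. fb y e) E)" unfolding B_def by (rule msum_swap)
    also have "\<dots> = sum_mset (image_mset (\<lambda>e. if k e < N then 1 / real m else 0) E)"
    proof -
      have "(\<Sum>y\<in>L. fb y e) = (if k e < N then 1 / real m else 0)" for e
      proof -
        have "(\<Sum>y\<in>L. fb y e) = (\<Sum>y\<in>L - e. 1 / (real m * (real N - real (k e))))"
          unfolding fb_def using fin
          by (simp add: sum.If_cases Diff_eq) (metis Compl_eq)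
        also have "\<dots> = real (card (L - e)) / (real m * (real N - real (k e)))" by simp
        also have "card (L - e) = N - k e" unfolding N_def k_def
          using fin by (metis card_Diff_subset_Int finite_Int inf_commute)
        finally have eq: "(\<Sum>y\<in>L. fb y e) = real (N - k e) / (real m * (real N - real (k e)))" .
        have kle: "k e \<le> N" unfolding k_def N_def using fin by (simp add: card_mono)
        show ?thesis
        proof (cases "k e < N")
          case True
          then show ?thesis using eq mpos by (simp add: of_nat_diff)
        next
          case False
          then have "k e = N" using kle by simp
          then show ?thesis using eq by simp
        qed
      qed
      then show ?thesis by simp
    qed
    finally show ?thesis .
  qed
  have B1: "B \<le> 1"
  proof -
    have "B = 1 / real m * real (size (filter_mset (\<lambda>e. k e < N) E))"
      using Bform msum_if_const by metis
    also have "\<dots> \<le> 1 / real m * real m" unfolding m_def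
      by (intro mult_left_mono) auto
    finally show ?thesis using mpos by simp
  qed
  have mN: "real t * real N \<le> real m" using big m_def N_def
    by (metis of_nat_le_iff of_nat_mult)
  have cmp: "fa y e \<le> fb y e" and cmps: "real N * real (r y) < real m * real (k e) \<Longrightarrow> y \<notin> e \<Longrightarrow> fa y e < fb y e"
    if "y \<in> L" "e \<in># E" for y e
  proof -
    have rl: "r y < m" using rlt that r_def m_def by auto
    have ke: "y \<notin> e \<Longrightarrow> k e < N" unfolding k_def N_def using fin that
      by (metis IntE card_mono finite_Int inf_le2 order_le_imp_less_or_eq psubset_card_mono subset_iff_psubset_eq)
    have base: "y \<notin> e \<Longrightarrow> real N * real (r y) \<le> real m * real (k e)"
    proof -
      assume ye: "y \<notin> e"
      have "r y \<le> t * k e" using ineq that ye r_def k_def by auto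
      then have "real N * real (r y) \<le> real N * (real t * real (k e))"
        by (metis mult_left_mono of_nat_0_le_iff of_nat_le_iff of_nat_mult)
      also have "\<dots> = (real t * real N) * real (k e)" by simp
      also have "\<dots> \<le> real m * real (k e)" using mN by (simp add: mult_right_mono)
      finally show ?thesis .
    qed
    have pos1: "y \<notin> e \<Longrightarrow> 0 < real m * (real N - real (k e))" using ke mpos by simp
    have eq1: "real m * (real N - real (k e)) = real m * real N - real m * real (k e)"
      by (simp add: algebra_simps)
    have eq2: "real N * (real m - real (r y)) = real m * real N - real N * real (r y)"
      by (simp add: algebra_simps)
    show "fa y e \<le> fb y e"
    proof (cases "y \<in> e")
      case True then show ?thesis unfolding fa_def fb_def by simp
    next
      case False
      have "real m * (real N - real (k e)) \<le> real N * (real m - real (r y))"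
        using base[OF \<open>y \<notin> e\<close>] by (simp add: algebra_simps)
      then show ?thesis unfolding fa_def fb_def using \<open>y \<notin> e\<close> pos1
        by (simp add: frac_le)
    qed
    assume s: "real N * real (r y) < real m * real (k e)" and ye: "y \<notin> e"
    have "real m * (real N - real (k e)) < real N * (real m - real (r y))"
      using s by (simp add: algebra_simps)
    then show "fa y e < fb y e" unfolding fa_def fb_def using ye pos1[OF ye]
      by (simp add: frac_less2)
  qed
  have AB: "A \<le> B" unfolding A_def B_def
    by (intro sum_mono msum_mono) (auto intro: cmp)
  have p1: "card L * degree E y = size E * card (e \<inter> L)" if "y \<in> L" "e \<in># E" "y \<notin> e" for y e
  proof (rule ccontr)
    assume ne: "card L * degree E y \<noteq> size E * card (e \<inter> L)"
    have le: "real N * real (r y) \<le> real m * real (k e)"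
    proof -
      have "r y \<le> t * k e" using ineq that r_def k_def by auto
      then have "real N * real (r y) \<le> real N * (real t * real (k e))"
        by (metis mult_left_mono of_nat_0_le_iff of_nat_le_iff of_nat_mult)
      also have "\<dots> = (real t * real N) * real (k e)" by simp
      also have "\<dots> \<le> real m * real (k e)" using mN by (simp add: mult_right_mono)
      finally show ?thesis .
    qed
    have "real N * real (r y) \<noteq> real m * real (k e)" using ne unfolding N_def r_def m_def k_def
      by (metis of_nat_eq_iff of_nat_mult)
    then have s: "real N * real (r y) < real m * real (k e)" using le by simp
    have "sum_mset (image_mset (fa y) E) < sum_mset (image_mset (fb y) E)"
      using msum_strict[of E "fa y" "fb y" e] cmp[OF that(1)] cmps[OF that(1,2) s that(3)] that by auto
    then have "A < B" unfolding A_def B_def using fin that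
      by (intro sum_strict_mono_ex1) (auto intro!: msum_mono cmp)
    then show False using A1 B1 by simp
  qed
  have p2: "card (e \<inter> L) < card L" if "e \<in># E" for e
  proof (rule ccontr)
    assume "\<not> card (e \<inter> L) < card L"
    then have kN: "\<not> k e < N" unfolding k_def N_def .
    have "sum_mset (image_mset (\<lambda>e. if k e < N then 1 / real m else 0) E)
        < sum_mset (image_mset (\<lambda>e. 1 / real m) E)"
      using msum_strict[of E "\<lambda>e. if k e < N then 1 / real m else 0" "\<lambda>e. 1 / real m" e] that kN mpos
      by auto
    also have "\<dots> = 1" using mpos m_def by auto
    finally have "B < 1" using Bform by simp
    then show False using A1 AB by simp
  qed
  show ?thesis using p1 p2 by blast
qed

lemma two_elems:
  assumes "2 \<le> card A"
  obtains a b where "a \<in> A" "b \<in> A" "a \<noteq> b"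
proof -
  have "finite A" "A \<noteq> {}" using assms by (auto intro: card_ge_0_finite)
  then obtain a where a: "a \<in> A" by auto
  have "card (A - {a}) \<ge> 1" using assms a \<open>finite A\<close> by simp
  then obtain b where "b \<in> A - {a}" by (metis card.empty ex_in_conv not_one_le_zero)
  then show ?thesis using a that by auto
qed

locale PG =
  fixes L :: "'a set" and S :: "'a set set"
  assumes finL: "finite L" and Lne: "L \<noteq> {}"
    and sub: "\<forall>e\<in>S. e \<subseteq> L"
    and ge2: "\<forall>e\<in>S. 2 \<le> card e"
    and ltL: "\<forall>e\<in>S. card e < card L"
    and meet1: "\<forall>e\<in>S. \<forall>g\<in>S. e \<noteq> g \<longrightarrow> card (e \<inter> g) = 1"
    and cover: "\<forall>y\<in>L. \<forall>u\<in>L. y \<noteq> u \<longrightarrow> (\<exists>e\<in>S. y \<in> e \<and> u \<in> e)"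
    and cardS: "card S = card L"
    and Tr: "\<forall>y\<in>L. \<forall>e\<in>S. y \<notin> e \<longrightarrow> card {g\<in>S. y \<in> g} = card e"
begin

lemma finS: "finite S"
proof -
  have "S \<subseteq> Pow L" using sub by auto
  moreover have "finite (Pow L)" using finL by simp
  ultimately show ?thesis by (rule finite_subset)
qed

lemma fin_e: "e \<in> S \<Longrightarrow> finite e"
  by (rule finite_subset[OF _ finL]) (use sub in blast)

lemma meet_single:
  assumes "e \<in> S" "g \<in> S" "e \<noteq> g" "a \<in> e" "a \<in> g"
  shows "e \<inter> g = {a}"
proof -
  have "card (e \<inter> g) = 1" using meet1 assms(1,2,3) by blast
  then obtain b where b: "e \<inter> g = {b}" by (rule card_1_singletonE)
  have "a \<in> e \<inter> g" using assms(4,5) by simp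
  then have "a = b" using b by simp
  then show ?thesis using b by simp
qed

lemma two_common:
  assumes "e \<in> S" "g \<in> S" "a \<in> e" "a \<in> g" "b \<in> e" "b \<in> g" "a \<noteq> b"
  shows "e = g"
proof (rule ccontr)
  assume "e \<noteq> g"
  then have "e \<inter> g = {a}" using meet_single[of e g a] assms by simp
  then show False using assms by auto
qed

lemma near_pencil_case:
  assumes e: "e \<in> S" "card e + 1 = card L"
  shows "\<exists>v. L = insert v e \<and> v \<notin> e \<and> S = insert e ((\<lambda>u. {v, u}) ` e)"
proof -
  have "card (L - e) = 1" using e sub finL fin_e by (simp add: card_Diff_subset)
  then obtain v where v: "L - e = {v}" by (metis card_1_singletonE)
  have L: "L = insert v e" using v sub e by auto
  have ve: "v \<notin> e" using v by auto
  have other: "\<exists>u\<in>e. g = {v, u}" if g: "g \<in> S" "g \<noteq> e" for g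
  proof -
    have "v \<in> g"
    proof (rule ccontr)
      assume "v \<notin> g"
      then have "g \<subseteq> e" using sub g L by auto
      then have eg: "e \<inter> g = g" by auto
      have "card (e \<inter> g) = 1" using meet1 g e by blast
      moreover have "2 \<le> card g" using ge2 g by blast
      ultimately show False using eg by simp
    qed
    have "card (e \<inter> g) = 1" using meet1 g e by auto
    then obtain u where u: "e \<inter> g = {u}" by (metis card_1_singletonE)
    have "g = {v, u}" using u \<open>v \<in> g\<close> sub g L by auto
    then show ?thesis using u by auto
  qed
  have "S = insert e ((\<lambda>u. {v, u}) ` e)"
  proof
    show "S \<subseteq> insert e ((\<lambda>u. {v, u}) ` e)" using other by blast
    show "insert e ((\<lambda>u. {v, u}) ` e) \<subseteq> S"
    proof
      fix g assume "g \<in> insert e ((\<lambda>u. {v, u}) ` e)"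
      then show "g \<in> S"
      proof
        assume "g = e" then show ?thesis using e by simp
      next
        assume "g \<in> (\<lambda>u. {v, u}) ` e"
        then obtain u where u: "u \<in> e" "g = {v, u}" by auto
        have "v \<in> L" "u \<in> L" "v \<noteq> u" using L u ve by auto
        then obtain h where h: "h \<in> S" "v \<in> h" "u \<in> h" using cover by blast
        have "h \<noteq> e" using h ve by auto
        then obtain u' where "u' \<in> e" "h = {v, u'}" using other h by blast
        then have "h = g" using h u ve by auto
        then show ?thesis using h by simp
      qed
    qed
  qed
  then show ?thesis using L ve by blast
qed

lemma outside_both:
  assumes big: "\<forall>e\<in>S. card e + 1 \<noteq> card L"
    and f: "f \<in> S" and g: "g \<in> S"
  shows "\<exists>y\<in>L. y \<notin> f \<and> y \<notin> g"
proof (rule ccontr)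
  assume "\<not> ?thesis"
  then have Lfg: "L \<subseteq> f \<union> g" by auto
  have fL: "f \<subseteq> L" "g \<subseteq> L" using sub f g by auto
  have ff: "finite f" "finite g" using fin_e f g by auto
  show False
  proof (cases "f = g")
    case True
    then have "L \<subseteq> f" using Lfg by simp
    then have "card L \<le> card f" using ff by (simp add: card_mono)
    moreover have "card f < card L" using ltL f by blast
    ultimately show False by linarith
  next
    case False
    have c1: "card (f \<inter> g) = 1" using meet1 f g \<open>f \<noteq> g\<close> by blast
    have "card f + card g = card (f \<union> g) + card (f \<inter> g)" by (rule card_Un_Int[OF ff])
    moreover have "card L \<le> card (f \<union> g)" using Lfg ff by (simp add: card_mono)
    ultimately have sz: "card L + 1 \<le> card f + card g" using c1 by simp
    have "card g + 1 \<noteq> card L" "card g < card L" using big ltL g by blast+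
    then have gb: "card g + 2 \<le> card L" by linarith
    have "card f + 1 \<noteq> card L" "card f < card L" using big ltL f by blast+
    then have fb: "card f + 2 \<le> card L" by linarith
    have "card (f - g) = card f - card (f \<inter> g)" using ff by (simp add: card_Diff_subset_Int)
    then have "card (f - g) = card f - 1" using c1 by simp
    then have cfg: "2 \<le> card (f - g)" using sz gb by linarith
    have "card (g - f) = card g - card (g \<inter> f)" using ff by (simp add: card_Diff_subset_Int)
    also have "g \<inter> f = f \<inter> g" by blast
    finally have "card (g - f) = card g - 1" using c1 by simp
    then have cgf: "2 \<le> card (g - f)" using sz fb by linarith
    obtain a a' where a: "a \<in> f - g" "a' \<in> f - g" "a \<noteq> a'" by (rule two_elems[OF cfg])
    obtain b b' where b: "b \<in> g - f" "b' \<in> g - f" "b \<noteq> b'" by (rule two_elems[OF cgf])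
    have line: "{p, q} \<in> S" if p: "p \<in> f - g" and q: "q \<in> g - f" for p q
    proof -
      have pq: "p \<noteq> q" "p \<in> L" "q \<in> L" using p q fL by auto
      then obtain h where h: "h \<in> S" "p \<in> h" "q \<in> h" using cover by blast
      have pf: "p \<in> f" and qg: "q \<in> g" and pg: "p \<notin> g" and qf: "q \<notin> f" using p q by simp_all
      have hnf: "h \<noteq> f" using h(3) qf by blast
      have hng: "h \<noteq> g" using h(2) pg by blast
      have hf: "h \<inter> f = {p}" by (rule meet_single[OF h(1) f hnf h(2) pf])
      have hg: "h \<inter> g = {q}" by (rule meet_single[OF h(1) g hng h(3) qg])
      have "h \<subseteq> L" using sub h(1) by blast
      then have "h \<subseteq> f \<union> g" using Lfg by blast
      then have "h = {p, q}" using hf hg h(2,3) by blast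
      then show ?thesis using h(1) by simp
    qed
    have h1: "{a, b} \<in> S" "{a', b'} \<in> S" by (rule line[OF a(1) b(1)], rule line[OF a(2) b(2)])
    have d1: "a \<noteq> b" using a(1) b(1) by blast
    have d2: "a \<noteq> b'" using a(1) b(2) by blast
    have d3: "b \<noteq> a'" using a(2) b(1) by blast
    note d = d1 d2 d3
    have dis: "{a, b} \<inter> {a', b'} = {}" using d a(3) b(3) by simp
    have na: "a \<notin> {a', b'}" using d(2) a(3) by simp
    have ne: "{a, b} \<noteq> {a', b'}"
    proof
      assume "{a, b} = {a', b'}"
      then have "a \<in> {a', b'}" by (metis insertI1)
      then show False using na by contradiction
    qed
    have "card ({a, b} \<inter> {a', b'}) = 1" by (rule meet1[rule_format, OF h1(1) h1(2) ne])
    then show False using dis by simp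
  qed
qed

lemma line_missing:
  assumes "y \<in> L"
  shows "\<exists>e\<in>S. y \<notin> e"
proof (rule ccontr)
  assume "\<not> ?thesis"
  then have all: "\<forall>e\<in>S. y \<in> e" by auto
  define \<phi> where "\<phi> = (\<lambda>e. SOME u. u \<in> e - {y})"
  have phi: "\<phi> e \<in> e - {y}" if "e \<in> S" for e
  proof -
    have "card e \<ge> 2" using ge2 that by auto
    then obtain a b where "a \<in> e" "b \<in> e" "a \<noteq> b" by (rule two_elems)
    then have "\<exists>u. u \<in> e - {y}" by auto
    then show ?thesis unfolding \<phi>_def by (rule someI_ex)
  qed
  have "inj_on \<phi> S"
  proof (rule inj_onI)
    fix e g assume eg: "e \<in> S" "g \<in> S" "\<phi> e = \<phi> g"
    have pe: "\<phi> e \<in> e" "\<phi> e \<noteq> y" using phi[OF eg(1)] by auto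
    have pg: "\<phi> e \<in> g" using phi[OF eg(2)] eg(3) by auto
    show "e = g" by (rule two_common[OF eg(1) eg(2) pe(1) pg _ _ pe(2)]) (use all eg in blast)+
  qed
  moreover have "\<phi> ` S \<subseteq> L - {y}" using phi sub by blast
  ultimately have "card S \<le> card (L - {y})" using finL by (intro card_inj_on_le) auto
  moreover have "card (L - {y}) = card L - 1" using assms by simp
  moreover have "card L > 0" using assms finL by (auto simp: card_gt_0_iff)
  ultimately show False using cardS by linarith
qed

lemma proj_case:
  assumes big: "\<forall>e\<in>S. card e + 1 \<noteq> card L"
  shows "\<exists>k. card L = k^2 + k + 1 \<and> (\<forall>e\<in>S. card e = k + 1) \<and> (\<forall>y\<in>L. card {e\<in>S. y \<in> e} = k + 1)"
proof -
  have "S \<noteq> {}" using cardS Lne finL by auto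
  then obtain e0 where e0: "e0 \<in> S" by auto
  define K where "K = card e0"
  have same: "card f = K" if fS: "f \<in> S" for f
  proof -
    obtain y where y: "y \<in> L" "y \<notin> f" "y \<notin> e0" using outside_both[OF big fS e0] by blast
    have "card {g\<in>S. y \<in> g} = card f" using Tr y(1,2) fS by blast
    moreover have "card {g\<in>S. y \<in> g} = card e0" using Tr y(1,3) e0 by blast
    ultimately show ?thesis using K_def by simp
  qed
  have deg: "card {e\<in>S. y \<in> e} = K" if "y \<in> L" for y
    using line_missing[OF that] Tr that same by metis
  have K2: "K \<ge> 2" using ge2 e0 K_def by auto
  obtain y where y: "y \<in> L" using Lne by auto
  define Sy where "Sy = {e\<in>S. y \<in> e}"
  have finSy: "finite Sy" using finS Sy_def by auto
  have U: "L - {y} = (\<Union>e\<in>Sy. e - {y})"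
  proof
    show "L - {y} \<subseteq> (\<Union>e\<in>Sy. e - {y})"
    proof
      fix u assume "u \<in> L - {y}"
      then obtain e where "e \<in> S" "y \<in> e" "u \<in> e" using cover y by blast
      then show "u \<in> (\<Union>e\<in>Sy. e - {y})" using \<open>u \<in> L - {y}\<close> Sy_def by auto
    qed
    show "(\<Union>e\<in>Sy. e - {y}) \<subseteq> L - {y}" using sub Sy_def by auto
  qed
  have "card (\<Union>e\<in>Sy. e - {y}) = (\<Sum>e\<in>Sy. card (e - {y}))"
  proof (rule card_UN_disjoint[OF finSy])
    show "\<forall>i\<in>Sy. finite (i - {y})" using fin_e Sy_def by auto
    show "\<forall>i\<in>Sy. \<forall>j\<in>Sy. i \<noteq> j \<longrightarrow> (i - {y}) \<inter> (j - {y}) = {}"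
    proof (intro ballI impI)
      fix i j assume ij: "i \<in> Sy" "j \<in> Sy" "i \<noteq> j"
      then have "i \<inter> j = {y}" using meet_single[of i j y] Sy_def by auto
      then show "(i - {y}) \<inter> (j - {y}) = {}" by auto
    qed
  qed
  also have "\<dots> = (\<Sum>e\<in>Sy. K - 1)"
    by (rule sum.cong) (auto simp: Sy_def same fin_e)
  also have "\<dots> = K * (K - 1)" using deg[OF y] Sy_def by simp
  finally have "card (L - {y}) = K * (K - 1)" using U by simp
  then have cL: "card L = K * (K - 1) + 1" using y finL
    by (metis One_nat_def Suc_pred card_Diff_singleton card_gt_0_iff emptyE add.commute plus_1_eq_Suc)
  define k where "k = K - 1"
  have Kk: "K = k + 1" using K2 k_def by simp
  have "card L = k^2 + k + 1" using cL Kk by (simp add: power2_eq_square algebra_simps)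
  then show ?thesis using same deg Kk by blast
qed

end

lemma nbhd_iff: "u \<in> closed_nbhd E z \<longleftrightarrow> (\<exists>e. e \<in># E \<and> z \<in> e \<and> u \<in> e)"
  unfolding closed_nbhd_def by auto

lemma nbhd_sym: "u \<in> closed_nbhd E z \<longleftrightarrow> z \<in> closed_nbhd E u"
  unfolding nbhd_iff by blast

lemma edge_in_nbhd: "e \<in># E \<Longrightarrow> z \<in> e \<Longrightarrow> e \<subseteq> closed_nbhd E z"
  unfolding closed_nbhd_def by auto

lemma codeg_sym: "codeg E u w = codeg E w u"
  unfolding codeg_def by (metis (no_types, lifting) filter_mset_cong0)

lemma deg_le_sum:
  assumes "intersecting E" "e \<in># E" "finite e" "z \<notin> e"
  shows "degree E z \<le> (\<Sum>u\<in>e \<inter> closed_nbhd E z. codeg E z u)"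
  unfolding degree_def codeg_def
proof (rule union_bound)
  show "finite (e \<inter> closed_nbhd E z)" using assms(3) by simp
  show "\<forall>g\<in>#E. z \<in> g \<longrightarrow> (\<exists>u\<in>e \<inter> closed_nbhd E z. z \<in> g \<and> u \<in> g)"
  proof (intro ballI impI)
    fix g assume g: "g \<in># E" "z \<in> g"
    have "e \<inter> g \<noteq> {}" using assms(1,2) g(1) unfolding intersecting_def by blast
    then obtain u where u: "u \<in> e" "u \<in> g" by blast
    have "u \<in> closed_nbhd E z" using g u unfolding nbhd_iff by blast
    then show "\<exists>u\<in>e \<inter> closed_nbhd E z. z \<in> g \<and> u \<in> g" using u g by blast
  qed
qed

lemma sum_codeg_le:
  assumes "codegree_le E t" "z \<notin> U"
  shows "(\<Sum>u\<in>U. codeg E z u) \<le> t * card U"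
proof -
  have "\<forall>u\<in>U. codeg E z u \<le> t" using assms unfolding codegree_le_def codeg_def by metis
  then have "(\<Sum>u\<in>U. codeg E z u) \<le> of_nat (card U) * t" by (intro sum_bounded_above) blast
  then show ?thesis by (simp add: mult.commute)
qed

lemma deg_le_t:
  assumes "intersecting E" "codegree_le E t" "e \<in># E" "finite e" "z \<notin> e"
  shows "degree E z \<le> t * card (e \<inter> closed_nbhd E z)"
proof -
  have "degree E z \<le> (\<Sum>u\<in>e \<inter> closed_nbhd E z. codeg E z u)"
    by (rule deg_le_sum[OF assms(1,3,4,5)])
  also have "\<dots> \<le> t * card (e \<inter> closed_nbhd E z)"
    by (rule sum_codeg_le[OF assms(2)]) (use assms(5) in blast)
  finally show ?thesis .
qed

lemma deg_lt_strict:
  assumes "intersecting E" "e \<in># E" "g \<in># E" "finite e" "z \<in> g" "z \<notin> e"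
    "u \<in> e" "u \<in> g" "w \<in> e" "w \<in> g" "u \<noteq> w"
  shows "degree E z < (\<Sum>u\<in>e \<inter> closed_nbhd E z. codeg E z u)"
  unfolding degree_def codeg_def
proof (rule union_bound_strict)
  show "finite (e \<inter> closed_nbhd E z)" using assms(4) by simp
  show "\<forall>g\<in>#E. z \<in> g \<longrightarrow> (\<exists>u\<in>e \<inter> closed_nbhd E z. z \<in> g \<and> u \<in> g)"
  proof (intro ballI impI)
    fix g assume g: "g \<in># E" "z \<in> g"
    have "e \<inter> g \<noteq> {}" using assms(1,2) g(1) unfolding intersecting_def by blast
    then obtain u where u: "u \<in> e" "u \<in> g" by blast
    have "u \<in> closed_nbhd E z" using g u unfolding nbhd_iff by blast
    then show "\<exists>u\<in>e \<inter> closed_nbhd E z. z \<in> g \<and> u \<in> g" using u g by blast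
  qed
  show "g \<in># E" "z \<in> g" by (fact assms(3), fact assms(5))
  have "u \<in> closed_nbhd E z" "w \<in> closed_nbhd E z" unfolding nbhd_iff using assms(3,5,8,10) by blast+
  then show "u \<in> e \<inter> closed_nbhd E z" "w \<in> e \<inter> closed_nbhd E z" using assms(7,9) by simp_all
  show "u \<noteq> w" by (fact assms(11))
  show "z \<in> g \<and> u \<in> g" "z \<in> g \<and> w \<in> g" using assms by simp_all
qed

lemma filter_repeat: "filter_mset Q (repeat_mset n M) = repeat_mset n (filter_mset Q M)"
  by (rule multiset_eqI) simp

lemma filter_pos:
  assumes "1 \<le> size (filter_mset P M)"
  shows "\<exists>g. g \<in># M \<and> P g"
proof (rule ccontr)
  assume "\<not> ?thesis"
  then have "filter_mset P M = {#}" by (simp add: filter_mset_eq_mempty_iff)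
  then show False using assms by (simp del: filter_mset_eq_mempty_iff)
qed

lemma codeg_pos: "codeg E y u = t \<Longrightarrow> 1 \<le> t \<Longrightarrow> \<exists>g. g \<in># E \<and> y \<in> g \<and> u \<in> g"
  unfolding codeg_def using filter_pos[of "\<lambda>g. y \<in> g \<and> u \<in> g" E] by simp

lemma deg_pos: "1 \<le> degree E u \<Longrightarrow> \<exists>g. g \<in># E \<and> u \<in> g"
  unfolding degree_def using filter_pos[of "\<lambda>g. u \<in> g" E] by simp

lemma card2_sub:
  assumes "u \<in> A" "w \<in> A" "u \<noteq> w" "finite A"
  shows "2 \<le> card A"
proof -
  have "card {u, w} \<le> card A" using assms by (intro card_mono) auto
  then show ?thesis using assms(3) by simp
qed

locale GL =
  fixes L :: "'a set" and E :: "'a set multiset" and t :: nat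
  assumes finL: "finite L" and Lne: "L \<noteq> {}"
    and subL: "\<forall>e\<in>#E. e \<subseteq> L"
    and ge2: "\<forall>e\<in>#E. 2 \<le> card e"
    and inter: "intersecting E"
    and cod: "codegree_le E t"
    and t1: "1 \<le> t"
    and T: "\<forall>y\<in>L. \<forall>e\<in>#E. y \<notin> e \<longrightarrow> degree E y = t * card e"
    and NF: "\<forall>e\<in>#E. card e < card L"
    and DP: "\<forall>y\<in>L. 1 \<le> degree E y"
    and MS: "size E = t * card L"
begin

lemma fin_e: "e \<in># E \<Longrightarrow> finite e"
  by (rule finite_subset[OF _ finL]) (use subL in blast)

lemma A_full:
  assumes y: "y \<in> L" and e: "e \<in># E" and ye: "y \<notin> e" and u: "u \<in> e"
  shows "codeg E y u = t"
proof -
  have fe: "finite e" using fin_e e by simp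
  have d: "degree E y = t * card e" using T y e ye by blast
  have le1: "degree E y \<le> (\<Sum>u\<in>e \<inter> closed_nbhd E y. codeg E y u)"
    by (rule deg_le_sum[OF inter e fe ye])
  have le2: "(\<Sum>u\<in>e \<inter> closed_nbhd E y. codeg E y u) \<le> t * card (e \<inter> closed_nbhd E y)"
    by (rule sum_codeg_le[OF cod]) (use ye in blast)
  have "t * card e \<le> t * card (e \<inter> closed_nbhd E y)" using d le1 le2 by linarith
  then have "card e \<le> card (e \<inter> closed_nbhd E y)" using t1 by simp
  moreover have "card (e \<inter> closed_nbhd E y) \<le> card e" by (rule card_mono[OF fe]) blast
  ultimately have "card (e \<inter> closed_nbhd E y) = card e" by simp
  then have eq: "e \<inter> closed_nbhd E y = e" using card_subset_eq[OF fe] by blast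
  then have "t * card e \<le> (\<Sum>u\<in>e. codeg E y u)" using d le1 by simp
  moreover have "\<forall>u\<in>e. codeg E y u \<le> t" using cod ye unfolding codegree_le_def codeg_def by metis
  ultimately show ?thesis using all_eq_from_sum[OF fe _ _ u, of "codeg E y" t] by simp
qed

lemma B_le1:
  assumes e: "e \<in># E" and g: "g \<in># E" and z: "z \<in> g" "z \<notin> e"
  shows "card (e \<inter> g) \<le> 1"
proof (rule ccontr)
  assume "\<not> card (e \<inter> g) \<le> 1"
  then have "2 \<le> card (e \<inter> g)" by simp
  then obtain u w where uw: "u \<in> e \<inter> g" "w \<in> e \<inter> g" "u \<noteq> w" by (rule two_elems)
  have fe: "finite e" using fin_e e by simp
  have zL: "z \<in> L" using subL g z(1) by blast
  have "degree E z < (\<Sum>u\<in>e \<inter> closed_nbhd E z. codeg E z u)"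
    using uw by (intro deg_lt_strict[OF inter e g fe z]) auto
  also have "\<dots> \<le> t * card (e \<inter> closed_nbhd E z)"
    by (rule sum_codeg_le[OF cod]) (use z in blast)
  also have "\<dots> \<le> t * card e" using fe by (intro mult_left_mono card_mono) auto
  also have "\<dots> = degree E z" using T zL e z(2) by simp
  finally show False by simp
qed

lemma F1:
  assumes e: "e \<in># E" and g: "g \<in># E" and ne: "e \<noteq> g"
  shows "card (e \<inter> g) = 1"
proof -
  have "e \<inter> g \<noteq> {}" using inter e g unfolding intersecting_def by blast
  moreover have "finite (e \<inter> g)" using fin_e e by simp
  ultimately have ge: "1 \<le> card (e \<inter> g)" by (simp add: Suc_le_eq card_gt_0_iff)
  have "card (e \<inter> g) \<le> 1"
  proof (cases "g \<subseteq> e")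
    case True
    then have "\<not> e \<subseteq> g" using ne by blast
    then obtain z where "z \<in> e" "z \<notin> g" by blast
    then have "card (g \<inter> e) \<le> 1" using B_le1[OF g e] by blast
    then show ?thesis by (simp add: Int_commute)
  next
    case False
    then obtain z where "z \<in> g" "z \<notin> e" by blast
    then show ?thesis using B_le1[OF e g] by blast
  qed
  then show ?thesis using ge by simp
qed

lemma two_common:
  assumes e: "e \<in># E" and g: "g \<in># E" and "u \<in> e" "u \<in> g" "w \<in> e" "w \<in> g" "u \<noteq> w"
  shows "e = g"
proof (rule ccontr)
  assume "e \<noteq> g"
  then have "card (e \<inter> g) = 1" using F1 e g by blast
  moreover have "2 \<le> card (e \<inter> g)"
  proof (rule card2_sub[of u "e \<inter> g" w])
    show "u \<in> e \<inter> g" using assms(3,4) by simp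
    show "w \<in> e \<inter> g" using assms(5,6) by simp
    show "u \<noteq> w" by (fact assms(7))
    show "finite (e \<inter> g)" using fin_e[OF e] by simp
  qed
  ultimately show False by simp
qed

lemma F2:
  assumes e: "e \<in># E"
  shows "count E e = t"
proof -
  have "2 \<le> card e" using ge2 e by blast
  then obtain u w where uw: "u \<in> e" "w \<in> e" "u \<noteq> w" by (rule two_elems)
  have "filter_mset (\<lambda>g. u \<in> g \<and> w \<in> g) E = filter_mset (\<lambda>g. g = e) E"
  proof (rule filter_mset_cong0)
    fix g assume g: "g \<in># E"
    show "(u \<in> g \<and> w \<in> g) \<longleftrightarrow> g = e"
    proof
      assume a: "u \<in> g \<and> w \<in> g"
      have "e = g" by (rule two_common[OF e g uw(1) _ uw(2) _ uw(3)]) (use a in simp_all)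
      then show "g = e" by simp
    next
      assume "g = e"
      then show "u \<in> g \<and> w \<in> g" using uw by simp
    qed
  qed
  then have cnt: "codeg E u w = count E e" unfolding codeg_def
    by (simp add: filter_eq_replicate_mset)
  have "\<not> L \<subseteq> e"
  proof
    assume "L \<subseteq> e"
    then have "card L \<le> card e" using fin_e e by (simp add: card_mono)
    moreover have "card e < card L" using NF e by blast
    ultimately show False by linarith
  qed
  then obtain y where y: "y \<in> L" "y \<notin> e" by blast
  have cyu: "codeg E y u = t" by (rule A_full[OF y(1) e y(2) uw(1)])
  obtain g where g: "g \<in># E" "y \<in> g" "u \<in> g" using codeg_pos[OF cyu t1] by blast
  have "g \<noteq> e" using g(2) y(2) by metis
  have wg: "w \<notin> g"
  proof
    assume wg: "w \<in> g"
    have "e = g" by (rule two_common[OF e g(1) uw(1) g(3) uw(2) wg uw(3)])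
    then show False using \<open>g \<noteq> e\<close> by simp
  qed
  have wL: "w \<in> L" using subL e uw by blast
  have "codeg E w u = t" by (rule A_full[OF wL g(1) wg g(3)])
  then show ?thesis using cnt codeg_sym[of E w u] by simp
qed

definition S where "S = set_mset E"

lemma Erep: "E = repeat_mset t (mset_set S)"
proof (rule multiset_eqI)
  fix x
  show "count E x = count (repeat_mset t (mset_set S)) x"
  proof (cases "x \<in># E")
    case True
    then show ?thesis using F2 S_def by simp
  next
    case False
    then show ?thesis using S_def by (simp add: not_in_iff)
  qed
qed

lemma deg_eq: "degree E y = t * card {e\<in>S. y \<in> e}"
proof -
  have "degree E y = size (filter_mset (\<lambda>e. y \<in> e) (repeat_mset t (mset_set S)))"
    unfolding degree_def using Erep by simp
  also have "\<dots> = t * card {e\<in>S. y \<in> e}" unfolding filter_repeat S_def by simp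
  finally show ?thesis .
qed

lemma cardS: "card S = card L"
proof -
  have "size E = t * card S" using arg_cong[OF Erep, of size] by simp
  then show ?thesis using MS t1 by simp
qed

lemma cover_L:
  assumes yu: "y \<in> L" "u \<in> L" "y \<noteq> u"
  shows "\<exists>e\<in>S. y \<in> e \<and> u \<in> e"
proof (cases "\<exists>e\<in>#E. u \<in> e \<and> y \<notin> e")
  case True
  then obtain e where e: "e \<in># E" "u \<in> e" "y \<notin> e" by blast
  have cyu: "codeg E y u = t" by (rule A_full[OF yu(1) e(1) e(3) e(2)])
  obtain g where g: "g \<in># E" "y \<in> g" "u \<in> g" using codeg_pos[OF cyu t1] by blast
  have "g \<in> S" using g(1) S_def by simp
  then show ?thesis using g(2,3) by blast
next
  case nc: False
  have d1: "1 \<le> degree E u" using DP yu(2) by blast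
  obtain g where g: "g \<in># E" "u \<in> g" using deg_pos[OF d1] by blast
  have yg: "y \<in> g"
  proof (rule ccontr)
    assume "y \<notin> g"
    then have "\<exists>e\<in>#E. u \<in> e \<and> y \<notin> e" using g by blast
    with nc show False by simp
  qed
  have "g \<in> S" using g(1) S_def by simp
  then show ?thesis using g(2) yg by blast
qed

lemma Tr_L:
  assumes "y \<in> L" "e \<in> S" "y \<notin> e"
  shows "card {g\<in>S. y \<in> g} = card e"
proof -
  have "e \<in># E" using assms(2) S_def by simp
  then have "degree E y = t * card e" using T assms(1,3) by blast
  then have "t * card {g\<in>S. y \<in> g} = t * card e" using deg_eq by simp
  then show ?thesis using t1 by simp
qed

lemma PG_inst: "PG L S"
proof (unfold_locales)
  show "finite L" by (fact finL)
  show "L \<noteq> {}" by (fact Lne)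
  show "\<forall>e\<in>S. e \<subseteq> L" using subL unfolding S_def by simp
  show "\<forall>e\<in>S. 2 \<le> card e" using ge2 unfolding S_def by simp
  show "\<forall>e\<in>S. card e < card L" using NF unfolding S_def by simp
  show "\<forall>e\<in>S. \<forall>g\<in>S. e \<noteq> g \<longrightarrow> card (e \<inter> g) = 1" using F1 unfolding S_def by simp
  show "card S = card L" by (fact cardS)
  show "\<forall>y\<in>L. \<forall>e\<in>S. y \<notin> e \<longrightarrow> card {g\<in>S. y \<in> g} = card e" using Tr_L by blast
  show "\<forall>y\<in>L. \<forall>u\<in>L. y \<noteq> u \<longrightarrow> (\<exists>e\<in>S. y \<in> e \<and> u \<in> e)" using cover_L by blast
qed

lemma finS: "finite S" unfolding S_def by simp

lemma inP: "e \<in># mset_set S \<longleftrightarrow> e \<in> S"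
  using finS by simp

lemma hypP: "hypergraph L (mset_set S)"
  unfolding hypergraph_def
proof (intro conjI ballI)
  show "finite L" by (fact finL)
  fix e assume "e \<in># mset_set S"
  then have e: "e \<in># E" using inP S_def by simp
  have "2 \<le> card e" using ge2 e by blast
  then show "e \<noteq> {}" by auto
  show "e \<subseteq> L" using subL e by blast
qed

lemma conclude:
  "(\<exists>k P. projective_plane L P k \<and> E = t_fold t P)
   \<or> (\<exists>P. near_pencil L P (card L) \<and> E = t_fold t P)"
proof -
  interpret PG L S by (rule PG_inst)
  define P where "P = mset_set S"
  have EP: "E = t_fold t P" unfolding t_fold_def P_def by (rule Erep)
  show ?thesis
  proof (cases "\<exists>e\<in>S. card e + 1 = card L")
    case True
    then obtain e where e: "e \<in> S" "card e + 1 = card L" by blast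
    obtain v where v: "L = insert v e" "v \<notin> e" "S = insert e ((\<lambda>u. {v, u}) ` e)"
      using near_pencil_case[OF e] by blast
    have fe: "finite e" using fin_e e(1) by simp
    have notin: "e \<notin> (\<lambda>u. {v, u}) ` e"
    proof
      assume "e \<in> (\<lambda>u. {v, u}) ` e"
      then obtain u where "e = {v, u}" by blast
      then have "v \<in> e" by simp
      then show False using v(2) by contradiction
    qed
    have inj: "inj_on (\<lambda>u. {v, u}) e"
    proof (rule inj_onI)
      fix a b assume ab: "a \<in> e" "b \<in> e" "{v, a} = {v, b}"
      have "a \<noteq> v" "b \<noteq> v" using ab(1,2) v(2) by blast+
      then show "a = b" using ab(3) by (metis doubleton_eq_iff)
    qed
    have "P = add_mset e (mset_set ((\<lambda>u. {v, u}) ` e))"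
      unfolding P_def v(3) using fe notin by simp
    also have "mset_set ((\<lambda>u. {v, u}) ` e) = image_mset (\<lambda>u. {v, u}) (mset_set e)"
      using image_mset_mset_set[OF inj] by simp
    finally have Pf: "P = add_mset e (image_mset (\<lambda>u. {v, u}) (mset_set e))" .
    have "near_pencil L P (card L)"
      unfolding near_pencil_def using hypP P_def Pf v(1,2) by blast
    then show ?thesis using EP by blast
  next
    case False
    then have big: "\<forall>e\<in>S. card e + 1 \<noteq> card L" by blast
    obtain k where k: "card L = k^2 + k + 1" "\<forall>e\<in>S. card e = k + 1"
        "\<forall>y\<in>L. card {e\<in>S. y \<in> e} = k + 1"
      using proj_case[OF big] by blast
    have lin: "Defs.linear P"
      unfolding Defs.linear_def codegree_le_def
    proof (intro allI impI)
      fix u w :: 'a assume uw: "u \<noteq> w"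
      have "size (filter_mset (\<lambda>e. u \<in> e \<and> w \<in> e) P) = card {e\<in>S. u \<in> e \<and> w \<in> e}"
        unfolding P_def using finS by simp
      also have "\<dots> \<le> 1"
      proof -
        have "\<forall>a\<in>{e\<in>S. u \<in> e \<and> w \<in> e}. \<forall>b\<in>{e\<in>S. u \<in> e \<and> w \<in> e}. a = b"
        proof (intro ballI)
          fix a b assume a: "a \<in> {e\<in>S. u \<in> e \<and> w \<in> e}" and b: "b \<in> {e\<in>S. u \<in> e \<and> w \<in> e}"
          have a': "a \<in> S" "u \<in> a" "w \<in> a" using a by simp_all
          have b': "b \<in> S" "u \<in> b" "w \<in> b" using b by simp_all
          show "a = b" by (rule PG.two_common[OF PG_inst a'(1) b'(1) a'(2) b'(2) a'(3) b'(3) uw])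
        qed
        then show ?thesis using finS by (simp add: card_le_Suc0_iff_eq)
      qed
      finally show "size (filter_mset (\<lambda>e. u \<in> e \<and> w \<in> e) P) \<le> 1" .
    qed
    have int: "intersecting P"
      unfolding intersecting_def
    proof (intro ballI)
      fix e f assume "e \<in># P" "f \<in># P"
      then have ef: "e \<in> S" "f \<in> S" using P_def inP by simp_all
      show "e \<inter> f \<noteq> {}"
      proof (cases "e = f")
        case True
        have "2 \<le> card e" using ge2 ef(1) S_def by simp
        then show ?thesis using True by auto
      next
        case ne: False
        have "card (e \<inter> f) = 1" using meet1 ef ne by blast
        then show ?thesis by auto
      qed
    qed
    have cards: "\<forall>e\<in>#P. card e = k + 1" using k(2) P_def inP by simp
    have degs: "\<forall>x\<in>L. degree P x = k + 1"
    proof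
      fix x assume "x \<in> L"
      have "degree P x = card {e\<in>S. x \<in> e}" unfolding degree_def P_def using finS by simp
      then show "degree P x = k + 1" using k(3) \<open>x \<in> L\<close> by simp
    qed
    have "projective_plane L P k"
      unfolding projective_plane_def using hypP P_def lin int k(1) cards degs by blast
    then show ?thesis using EP by blast
  qed
qed

end

lemma deg_ge1: "e \<in># E \<Longrightarrow> z \<in> e \<Longrightarrow> 1 \<le> degree E z"
proof -
  assume a: "e \<in># E" "z \<in> e"
  then have "e \<in># filter_mset (\<lambda>e. z \<in> e) E" by simp
  then have "size (filter_mset (\<lambda>e. z \<in> e) E) \<noteq> 0" by (metis size_eq_0_iff_empty empty_iff set_mset_empty)
  then show ?thesis unfolding degree_def by linarith
qed

lemma nbhd_subV:
  assumes hyp: "hypergraph V E"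
  shows "closed_nbhd E z \<subseteq> V"
proof
  fix u assume "u \<in> closed_nbhd E z"
  then obtain e where e: "e \<in># E" "u \<in> e" unfolding nbhd_iff by blast
  have "e \<subseteq> V" using hyp e(1) unfolding hypergraph_def by blast
  then show "u \<in> V" using e(2) by blast
qed

lemma deg_full:
  assumes hyp: "hypergraph V E" and cod: "codegree_le E t" and no1: "\<forall>e\<in>#E. card e \<noteq> 1"
    and z: "degree E z = size E" and ne: "E \<noteq> {#}"
  shows "size E + t \<le> t * card (closed_nbhd E z)"
proof -
  have finV: "finite V" using hyp unfolding hypergraph_def by blast
  have Nsub: "closed_nbhd E z \<subseteq> V" by (rule nbhd_subV[OF hyp])
  have finN: "finite (closed_nbhd E z)" using finite_subset[OF Nsub finV] .
  define U where "U = closed_nbhd E z - {z}"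
  have "size (filter_mset (\<lambda>g. z \<in> g) E) \<le> (\<Sum>u\<in>U. size (filter_mset (\<lambda>g. z \<in> g \<and> u \<in> g) E))"
  proof (rule union_bound)
    show "finite U" using finN U_def by simp
    show "\<forall>g\<in>#E. z \<in> g \<longrightarrow> (\<exists>u\<in>U. z \<in> g \<and> u \<in> g)"
    proof (intro ballI impI)
      fix g assume g: "g \<in># E" "z \<in> g"
      have c1: "card g \<noteq> 1" using no1 g(1) by blast
      have gV: "g \<subseteq> V" using hyp g(1) unfolding hypergraph_def by blast
      have fg: "finite g" by (rule finite_subset[OF gV finV])
      have "card g \<noteq> 0" using fg g(2) by auto
      then have "2 \<le> card g" using c1 by linarith
      then obtain a b where ab: "a \<in> g" "b \<in> g" "a \<noteq> b" by (rule two_elems)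
      have "\<exists>u\<in>g. u \<noteq> z"
      proof (cases "a = z")
        case True
        have "b \<noteq> z" using ab(3) True by simp
        then show ?thesis using ab(2) by blast
      next
        case nz: False
        then show ?thesis using ab by blast
      qed
      then obtain u where u: "u \<in> g" "u \<noteq> z" by blast
      have "u \<in> closed_nbhd E z" unfolding nbhd_iff using g u(1) by blast
      then have "u \<in> U" using u(2) U_def by simp
      then show "\<exists>u\<in>U. z \<in> g \<and> u \<in> g" using g(2) u(1) by blast
    qed
  qed
  then have "degree E z \<le> (\<Sum>u\<in>U. codeg E z u)" unfolding degree_def codeg_def .
  also have "\<dots> \<le> t * card U" by (rule sum_codeg_le[OF cod]) (simp add: U_def)
  finally have d: "size E \<le> t * card U" using z by simp
  have "size E \<noteq> 0" using ne by simp
  then have d1: "1 \<le> degree E z" using z by linarith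
  obtain g where g: "g \<in># E" "z \<in> g" using deg_pos[OF d1] by blast
  have zN: "z \<in> closed_nbhd E z" unfolding nbhd_iff using g by blast
  have cU: "card U = card (closed_nbhd E z) - 1" unfolding U_def using zN finN by simp
  have "0 < card (closed_nbhd E z)" using zN finN card_gt_0_iff by blast
  then have "card (closed_nbhd E z) = card U + 1" using cU by linarith
  then have "t * card (closed_nbhd E z) = t * card U + t" by simp
  then show ?thesis using d by linarith
qed

lemma max_deg_vertex:
  assumes "finite V" "V \<noteq> {}"
  obtains x where "x \<in> V" "\<forall>y\<in>V. degree E y \<le> degree E x"
proof -
  define D where "D = Max (degree E ` V)"
  have "D \<in> degree E ` V" unfolding D_def using assms by (intro Max_in) auto
  then obtain x where x: "x \<in> V" "degree E x = D" by blast
  have "\<forall>y\<in>V. degree E y \<le> degree E x"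
  proof
    fix y assume "y \<in> V"
    then have "degree E y \<le> D" unfolding D_def using assms(1) by (intro Max_ge) auto
    then show "degree E y \<le> degree E x" using x(2) by simp
  qed
  then show ?thesis using x(1) that by blast
qed

lemma deg_le_size: "degree E y \<le> size E"
  unfolding degree_def by simp

lemma exists_missing:
  assumes "degree E x < size E"
  shows "\<exists>e. e \<in># E \<and> x \<notin> e"
proof (rule ccontr)
  assume "\<not> ?thesis"
  then have "\<forall>e. e \<in># E \<longrightarrow> x \<in> e" by blast
  then have "filter_mset (\<lambda>e. x \<in> e) E = filter_mset (\<lambda>e. True) E"
    by (intro filter_mset_cong0) blast
  then have "degree E x = size E" unfolding degree_def by simp
  then show False using assms by simp
qed

theorem theorem1p6:
  fixes V :: "'a set" and E :: "'a set multiset" and n t :: nat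
  assumes "hypergraph V E"
    and "card V = n"
    and "intersecting E"
    and "codegree_le E t"
    and "\<forall>e\<in>#E. card e \<noteq> 1"
  shows "size E \<le> t * Max ((\<lambda>v. card (closed_nbhd E v)) ` V)
    \<and> ((size E = t * Max ((\<lambda>v. card (closed_nbhd E v)) ` V) \<and> E \<noteq> {#}) \<longrightarrow>
       (\<exists>v\<in>V. size E = t * card (closed_nbhd E v)
          \<and> (\<forall>x\<in>V - closed_nbhd E v. degree E x = 0)
          \<and> ((\<exists>k P. projective_plane (closed_nbhd E v) P k
                  \<and> induced E (closed_nbhd E v) = t_fold t P)
             \<or> (\<exists>P. near_pencil (closed_nbhd E v) P (card (closed_nbhd E v))
                  \<and> induced E (closed_nbhd E v) = t_fold t P))))"
proof -
  note hyp = assms(1) and inter = assms(3) and cod = assms(4) and no1 = assms(5)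
  define M where "M = Max ((\<lambda>v. card (closed_nbhd E v)) ` V)"
  have finV: "finite V" using hyp unfolding hypergraph_def by blast
  have eV: "e \<subseteq> V" if "e \<in># E" for e using hyp that unfolding hypergraph_def by blast
  have ene: "e \<noteq> {}" if "e \<in># E" for e using hyp that unfolding hypergraph_def by blast
  have fine: "finite e" if "e \<in># E" for e by (rule finite_subset[OF eV[OF that] finV])
  have ge2: "2 \<le> card e" if "e \<in># E" for e
  proof -
    have "card e \<noteq> 0" using fine[OF that] ene[OF that] by simp
    moreover have "card e \<noteq> 1" using no1 that by blast
    ultimately show ?thesis by linarith
  qed
  have finN: "finite (closed_nbhd E z)" for z by (rule finite_subset[OF nbhd_subV[OF hyp] finV])
  have Mge: "card (closed_nbhd E v) \<le> M" if "v \<in> V" for v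
    unfolding M_def using finV that by (intro Max_ge) auto
  show ?thesis
  proof (cases "E = {#}")
    case True
    then show ?thesis by simp
  next
    case ne: False
    obtain e0 where e0: "e0 \<in># E" using ne by (metis multiset_nonemptyE)
    obtain a0 b0 where ab0: "a0 \<in> e0" "b0 \<in> e0" "a0 \<noteq> b0" using two_elems[OF ge2[OF e0]] by blast
    have "V \<noteq> {}" using eV[OF e0] ab0(1) by blast
    then obtain x where x: "x \<in> V" "\<forall>y\<in>V. degree E y \<le> degree E x"
      using max_deg_vertex[OF finV] by blast
    have t1: "1 \<le> t"
    proof -
      have "e0 \<in># filter_mset (\<lambda>e. a0 \<in> e \<and> b0 \<in> e) E" using e0 ab0 by simp
      then have "size (filter_mset (\<lambda>e. a0 \<in> e \<and> b0 \<in> e) E) \<noteq> 0"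
        by (metis size_eq_0_iff_empty empty_iff set_mset_empty)
      moreover have "size (filter_mset (\<lambda>e. a0 \<in> e \<and> b0 \<in> e) E) \<le> t"
        using cod ab0(3) unfolding codegree_le_def by blast
      ultimately show ?thesis by linarith
    qed
    show ?thesis
    proof (cases "\<exists>y\<in>V. degree E y = size E")
      case True
      then obtain y where y: "y \<in> V" "degree E y = size E" by blast
      have "size E + t \<le> t * card (closed_nbhd E y)" by (rule deg_full[OF hyp cod no1 y(2) ne])
      also have "\<dots> \<le> t * M" using Mge[OF y(1)] by simp
      finally have "size E < t * M" using t1 by linarith
      then show ?thesis unfolding M_def[symmetric] by simp
    next
      case nfull: False
      define L where "L = closed_nbhd E x"
      have rlt: "degree E y < size E" if yV: "y \<in> V" for y
      proof -
        have "degree E y \<noteq> size E" using nfull yV by blast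
        moreover have "degree E y \<le> size E" by (rule deg_le_size)
        ultimately show ?thesis by linarith
      qed
      have LV: "L \<subseteq> V" unfolding L_def by (rule nbhd_subV[OF hyp])
      have finL: "finite L" unfolding L_def by (rule finN)
      have da: "1 \<le> degree E a0" by (rule deg_ge1[OF e0 ab0(1)])
      have "a0 \<in> V" using eV[OF e0] ab0(1) by blast
      then have "degree E a0 \<le> degree E x" using x(2) by blast
      then have dx: "1 \<le> degree E x" using da by linarith
      obtain g0 where g0: "g0 \<in># E" "x \<in> g0" using deg_pos[OF dx] by blast
      have g0L: "g0 \<subseteq> L" unfolding L_def by (rule edge_in_nbhd[OF g0])
      have xL: "x \<in> L" using g0L g0(2) by blast
      have Lne: "L \<noteq> {}" using xL by blast
      have k1: "\<forall>e\<in>#E. card (e \<inter> L) \<ge> 1"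
      proof
        fix e assume e: "e \<in># E"
        have "e \<inter> g0 \<noteq> {}" using inter e g0(1) unfolding intersecting_def by blast
        then obtain w where "w \<in> e" "w \<in> g0" by blast
        then have "w \<in> e \<inter> L" using g0L by blast
        then have "e \<inter> L \<noteq> {}" by blast
        moreover have "finite (e \<inter> L)" using finL by simp
        ultimately show "card (e \<inter> L) \<ge> 1" by (simp add: Suc_le_eq card_gt_0_iff)
      qed
      have rltL: "\<forall>y\<in>L. degree E y < size E" using rlt LV by blast
      have ineq0: "degree E y \<le> t * card (e \<inter> L)" if y: "y \<in> L" "e \<in># E" "y \<notin> e" for y e
      proof (cases "x \<in> e")
        case True
        have eL: "e \<subseteq> L" unfolding L_def by (rule edge_in_nbhd[OF y(2) True])
        have "degree E y \<le> t * card (e \<inter> closed_nbhd E y)" by (rule deg_le_t[OF inter cod y(2) fine[OF y(2)] y(3)])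
        also have "\<dots> \<le> t * card e" using fine[OF y(2)] by (intro mult_left_mono card_mono) auto
        also have "e \<inter> L = e" using eL by blast
        then have "t * card e = t * card (e \<inter> L)" by simp
        finally show ?thesis .
      next
        case False
        have "degree E y \<le> degree E x" using x(2) LV y(1) by blast
        also have "\<dots> \<le> t * card (e \<inter> closed_nbhd E x)" by (rule deg_le_t[OF inter cod y(2) fine[OF y(2)] False])
        finally show ?thesis unfolding L_def .
      qed
      have ineq: "\<forall>y\<in>L. \<forall>e\<in>#E. y \<notin> e \<longrightarrow> degree E y \<le> t * card (e \<inter> L)" using ineq0 by blast
      have leL: "size E \<le> t * card L"
      proof (rule ccontr)
        assume "\<not> size E \<le> t * card L"
        then have lt: "t * card L < size E" by simp
        have core: "\<forall>y\<in>L. \<forall>e\<in>#E. y \<notin> e \<longrightarrow> card L * degree E y = size E * card (e \<inter> L)"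
          using fractional_core[OF finL Lne k1 rltL ineq] lt by simp
        obtain e1 where e1: "e1 \<in># E" "x \<notin> e1" using exists_missing[OF rlt[OF x(1)]] by blast
        have c: "card L * degree E x = size E * card (e1 \<inter> L)" using core xL e1 by blast
        have "degree E x \<le> t * card (e1 \<inter> L)" by (rule ineq0[OF xL e1])
        then have "card L * degree E x \<le> (t * card L) * card (e1 \<inter> L)" by (simp add: algebra_simps)
        also have "\<dots> < size E * card (e1 \<inter> L)" using lt k1 e1(1) by (intro mult_strict_right_mono) auto
        finally show False using c by simp
      qed
      have xM: "card L \<le> M" unfolding L_def by (rule Mge[OF x(1)])
      have part1: "size E \<le> t * M" using leL xM by (meson le_trans mult_le_mono2)
      have part2: "\<exists>v\<in>V. size E = t * card (closed_nbhd E v)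
          \<and> (\<forall>x\<in>V - closed_nbhd E v. degree E x = 0)
          \<and> ((\<exists>k P. projective_plane (closed_nbhd E v) P k
                  \<and> induced E (closed_nbhd E v) = t_fold t P)
             \<or> (\<exists>P. near_pencil (closed_nbhd E v) P (card (closed_nbhd E v))
                  \<and> induced E (closed_nbhd E v) = t_fold t P))" if eq: "size E = t * M"
      proof -
        have "t * card L \<le> t * M" using xM by simp
        then have "t * M \<le> t * card L" using eq leL by linarith
        then have "M \<le> card L" using t1 by simp
        then have mL: "card L = M" using xM by simp
        have sE: "size E = t * card L" using eq mL by simp
        have core: "(\<forall>y\<in>L. \<forall>e\<in>#E. y \<notin> e \<longrightarrow> card L * degree E y = size E * card (e \<inter> L))
             \<and> (\<forall>e\<in>#E. card (e \<inter> L) < card L)"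
          using fractional_core[OF finL Lne k1 rltL ineq] sE by simp
        have cLpos: "0 < card L" using finL Lne card_gt_0_iff by blast
        have Tf: "degree E y = t * card (e \<inter> L)" if y: "y \<in> L" "e \<in># E" "y \<notin> e" for y e
        proof -
          have "card L * degree E y = card L * (t * card (e \<inter> L))"
            using core y sE by (simp add: algebra_simps)
          then show ?thesis using cLpos by simp
        qed
        have Nbig: "L \<subseteq> closed_nbhd E u" if u: "u \<in> L" "u \<noteq> x" for u
        proof
          fix y assume yL: "y \<in> L"
          obtain e where e: "e \<in># E" "x \<in> e" "u \<in> e" using u(1) unfolding L_def nbhd_iff by blast
          show "y \<in> closed_nbhd E u"
          proof (cases "y \<in> e")
            case True
            then show ?thesis unfolding nbhd_iff using e by blast
          next
            case ye: False
            have eL: "e \<subseteq> L" unfolding L_def by (rule edge_in_nbhd[OF e(1) e(2)])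
            have eLe: "e \<inter> L = e" using eL by blast
            have "t * card e = degree E y" using Tf[OF yL e(1) ye] eLe by simp
            also have "\<dots> \<le> t * card (e \<inter> closed_nbhd E y)" by (rule deg_le_t[OF inter cod e(1) fine[OF e(1)] ye])
            finally have "card e \<le> card (e \<inter> closed_nbhd E y)" using t1 by simp
            moreover have "card (e \<inter> closed_nbhd E y) \<le> card e" by (rule card_mono[OF fine[OF e(1)]]) blast
            ultimately have "card (e \<inter> closed_nbhd E y) = card e" by simp
            then have "e \<inter> closed_nbhd E y = e" using card_subset_eq[OF fine[OF e(1)]] by blast
            then have "u \<in> closed_nbhd E y" using e(3) by blast
            then show ?thesis using nbhd_sym[of u E y] by simp
          qed
        qed
        have allin: "e \<subseteq> L" if e: "e \<in># E" for e
        proof (rule ccontr)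
          assume "\<not> e \<subseteq> L"
          then obtain w where w: "w \<in> e" "w \<notin> L" by blast
          have xe: "x \<notin> e"
          proof
            assume "x \<in> e"
            then have "e \<subseteq> L" unfolding L_def by (rule edge_in_nbhd[OF e])
            then show False using w by blast
          qed
          have "e \<inter> g0 \<noteq> {}" using inter e g0(1) unfolding intersecting_def by blast
          then obtain u where u: "u \<in> e" "u \<in> g0" by blast
          have uL: "u \<in> L" using u(2) g0L by blast
          have ux: "u \<noteq> x" using u(1) xe by blast
          have wN: "w \<in> closed_nbhd E u" unfolding nbhd_iff using e u(1) w(1) by blast
          have sub: "insert w L \<subseteq> closed_nbhd E u" using Nbig[OF uL ux] wN by blast
          have "card L + 1 = card (insert w L)" using finL w(2) by simp
          also have "\<dots> \<le> card (closed_nbhd E u)" by (rule card_mono[OF finN sub])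
          also have "\<dots> \<le> M" using Mge LV uL by blast
          finally show False using mL by simp
        qed
        interpret GL L E t
        proof (unfold_locales)
          show "finite L" by (fact finL)
          show "L \<noteq> {}" by (fact Lne)
          show "\<forall>e\<in>#E. e \<subseteq> L" using allin by blast
          show "\<forall>e\<in>#E. 2 \<le> card e" using ge2 by blast
          show "intersecting E" by (fact inter)
          show "codegree_le E t" by (fact cod)
          show "1 \<le> t" by (fact t1)
          show "\<forall>y\<in>L. \<forall>e\<in>#E. y \<notin> e \<longrightarrow> degree E y = t * card e"
          proof (intro ballI impI)
            fix y e assume ye: "y \<in> L" "e \<in># E" "y \<notin> e"
            have "e \<inter> L = e" using allin[OF ye(2)] by blast
            moreover have "degree E y = t * card (e \<inter> L)" by (rule Tf[OF ye])
            ultimately show "degree E y = t * card e" by simp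
          qed
          show "\<forall>e\<in>#E. card e < card L"
          proof
            fix e assume eE: "e \<in># E"
            have "e \<inter> L = e" using allin[OF eE] by blast
            moreover have "card (e \<inter> L) < card L" using core eE by blast
            ultimately show "card e < card L" by simp
          qed
          show "\<forall>y\<in>L. 1 \<le> degree E y"
          proof
            fix y assume "y \<in> L"
            then obtain e where ey: "e \<in># E" "x \<in> e" "y \<in> e" unfolding L_def nbhd_iff by blast
            show "1 \<le> degree E y" by (rule deg_ge1[OF ey(1) ey(3)])
          qed
          show "size E = t * card L" by (fact sE)
        qed
        have ind: "induced E L = E"
          unfolding induced_def
        proof -
          have "filter_mset (\<lambda>e. e \<subseteq> L) E = filter_mset (\<lambda>e. True) E"
            by (rule filter_mset_cong0) (use allin in blast)
          then show "filter_mset (\<lambda>e. e \<subseteq> L) E = E" by simp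
        qed
        have deg0: "\<forall>z\<in>V - L. degree E z = 0"
        proof
          fix z assume z: "z \<in> V - L"
          have "filter_mset (\<lambda>e. z \<in> e) E = filter_mset (\<lambda>e. False) E"
          proof (rule filter_mset_cong0)
            fix e assume "e \<in># E"
            then have "e \<subseteq> L" by (rule allin)
            then show "(z \<in> e) = False" using z by blast
          qed
          then show "degree E z = 0" unfolding degree_def by simp
        qed
        have "(\<exists>k P. projective_plane L P k \<and> E = t_fold t P)
           \<or> (\<exists>P. near_pencil L P (card L) \<and> E = t_fold t P)" by (rule conclude)
        then have "(\<exists>k P. projective_plane L P k \<and> induced E L = t_fold t P)
           \<or> (\<exists>P. near_pencil L P (card L) \<and> induced E L = t_fold t P)" using ind by simp
        then have "size E = t * card L \<and> (\<forall>z\<in>V - L. degree E z = 0)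
           \<and> ((\<exists>k P. projective_plane L P k \<and> induced E L = t_fold t P)
           \<or> (\<exists>P. near_pencil L P (card L) \<and> induced E L = t_fold t P))" using sE deg0 by blast
        then show ?thesis unfolding L_def by (rule bexI[OF _ x(1)])
      qed
      show ?thesis using part1 part2 unfolding M_def by blast
    qed
  qed
qed

end
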